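(* Let $\hat{Y}$, $\hat{A}$, $A$ be random variables on a common probability space, where $\hat{Y}$ takes values in a finite set $\mathcal{Y}$ and $A,\hat{A}$ take values in a common finite set $\mathcal{A}$. Identify values with their one-hot vectors, use the $\ell_p$-norm ($p\ge1$) as ground metric, and for pairs use the $\ell_p$-norm of the concatenated one-hot vectors. Then $$I_W(\hat{Y},A)\le I_W(\hat{Y},\hat{A})+2\sqrt[p]{2}\,\mathbb{P}(A\neq\hat{A}).$$
   Context: For random variables $U,V$, the Wasserstein Dependency Measure is $I_W(U,V)=W_1(p(U,V),p(U)p(V))$, where $W_1$ is the 1-Wasserstein distance with respect to the ground metric, $p(U,V)$ the joint law and $p(U)p(V)$ the product of the marginals. Interpretation: $\hat{Y}$ is a predicted label, $A$ a true sensitive attribute, $\hat{A}$ a predicted sensitive attribute. *)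

theory Defs
  imports "HOL-Probability.Probability"
begin

definition onehot :: "'x \<Rightarrow> 'x \<Rightarrow> real" where
  "onehot x = (\<lambda>z. if z = x then 1 else 0)"

definition lp_norm :: "real \<Rightarrow> ('i::finite \<Rightarrow> real) \<Rightarrow> real" where
  "lp_norm p v = (\<Sum>i\<in>UNIV. \<bar>v i\<bar> powr p) powr (1 / p)"

definition lp_dist :: "real \<Rightarrow> ('i::finite \<Rightarrow> real) \<Rightarrow> ('i \<Rightarrow> real) \<Rightarrow> real" where
  "lp_dist p u v = lp_norm p (\<lambda>i. u i - v i)"

definition concat_vec :: "('i \<Rightarrow> real) \<Rightarrow> ('j \<Rightarrow> real) \<Rightarrow> ('i + 'j \<Rightarrow> real)" where
  "concat_vec u v = case_sum u v"

definition pair_dist :: "real \<Rightarrow> ('y::finite \<times> 'a::finite) \<Rightarrow> ('y \<times> 'a) \<Rightarrow> real" where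
  "pair_dist p z z' =
     lp_dist p (concat_vec (onehot (fst z)) (onehot (snd z)))
               (concat_vec (onehot (fst z')) (onehot (snd z')))"

definition couplings :: "('x::finite \<Rightarrow> real) \<Rightarrow> ('x \<Rightarrow> real) \<Rightarrow> ('x \<times> 'x \<Rightarrow> real) set" where
  "couplings P Q = {\<gamma>. (\<forall>z. 0 \<le> \<gamma> z) \<and> (\<forall>x. (\<Sum>x'\<in>UNIV. \<gamma> (x, x')) = P x)
                        \<and> (\<forall>x'. (\<Sum>x\<in>UNIV. \<gamma> (x, x')) = Q x')}"

definition W1 :: "('x::finite \<Rightarrow> 'x \<Rightarrow> real) \<Rightarrow> ('x \<Rightarrow> real) \<Rightarrow> ('x \<Rightarrow> real) \<Rightarrow> real" where
  "W1 d P Q = Inf ((\<lambda>\<gamma>. \<Sum>z\<in>UNIV. \<gamma> z * d (fst z) (snd z)) ` couplings P Q)"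

definition joint_law :: "'w measure \<Rightarrow> ('w \<Rightarrow> 'u) \<Rightarrow> ('w \<Rightarrow> 'v) \<Rightarrow> ('u \<times> 'v \<Rightarrow> real)" where
  "joint_law M U V = (\<lambda>(u, v). measure M {w \<in> space M. U w = u \<and> V w = v})"

definition prod_marginals :: "'w measure \<Rightarrow> ('w \<Rightarrow> 'u) \<Rightarrow> ('w \<Rightarrow> 'v) \<Rightarrow> ('u \<times> 'v \<Rightarrow> real)" where
  "prod_marginals M U V =
     (\<lambda>(u, v). measure M {w \<in> space M. U w = u} * measure M {w \<in> space M. V w = v})"

definition IW :: "real \<Rightarrow> 'w measure \<Rightarrow> ('w \<Rightarrow> 'y::finite) \<Rightarrow> ('w \<Rightarrow> 'a::finite) \<Rightarrow> real" where
  "IW p M U V = W1 (pair_dist p) (joint_law M U V) (prod_marginals M U V)"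

end

theory Submission
  imports Defs
begin

lemma sum_pair: "(\<Sum>z\<in>(UNIV::('a::finite \<times> 'b::finite) set). f z) = (\<Sum>x\<in>UNIV. \<Sum>y\<in>UNIV. f (x,y))"
proof -
  have "(\<Sum>z\<in>(UNIV::('a \<times> 'b) set). f z) = (\<Sum>z\<in>UNIV \<times> UNIV. f z)" by simp
  also have "\<dots> = (\<Sum>x\<in>UNIV. \<Sum>y\<in>UNIV. f (x,y))" by (simp add: sum.cartesian_product)
  finally show ?thesis .
qed

definition cost :: "('x::finite \<Rightarrow> 'x \<Rightarrow> real) \<Rightarrow> ('x \<times> 'x \<Rightarrow> real) \<Rightarrow> real" where
  "cost d \<gamma> = (\<Sum>z\<in>UNIV. \<gamma> z * d (fst z) (snd z))"

lemma W1_le: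
  assumes "\<gamma> \<in> couplings P Q" "\<And>x y. 0 \<le> d x y"
  shows "W1 d P Q \<le> cost d \<gamma>"
  unfolding W1_def cost_def
proof (rule cInf_lower)
  show "(\<Sum>z\<in>UNIV. \<gamma> z * d (fst z) (snd z)) \<in> (\<lambda>\<gamma>. \<Sum>z\<in>UNIV. \<gamma> z * d (fst z) (snd z)) ` couplings P Q"
    using assms(1) by blast
  show "bdd_below ((\<lambda>\<gamma>. \<Sum>z\<in>UNIV. \<gamma> z * d (fst z) (snd z)) ` couplings P Q)"
    by (rule bdd_belowI[where m=0]) (auto simp: couplings_def intro!: sum_nonneg mult_nonneg_nonneg assms(2))
qed

lemma W1_ge:
  assumes "couplings P Q \<noteq> {}" "\<And>\<gamma>. \<gamma> \<in> couplings P Q \<Longrightarrow> b \<le> cost d \<gamma>"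
  shows "b \<le> W1 d P Q"
  unfolding W1_def using assms by (intro cInf_greatest) (auto simp: cost_def)

lemma zero_col:
  assumes "\<gamma> \<in> couplings P Q" "Q y = 0"
  shows "\<gamma> (x, y) = 0"
proof -
  have "(\<Sum>x\<in>UNIV. \<gamma> (x, y)) = 0" using assms by (auto simp: couplings_def)
  moreover have "\<forall>x\<in>UNIV. 0 \<le> \<gamma> (x, y)" using assms by (auto simp: couplings_def)
  ultimately show ?thesis by (simp add: sum_nonneg_eq_0_iff)
qed

lemma zero_row:
  assumes "\<gamma> \<in> couplings P Q" "P x = 0"
  shows "\<gamma> (x, y) = 0"
proof -
  have "(\<Sum>y\<in>UNIV. \<gamma> (x, y)) = 0" using assms by (auto simp: couplings_def)
  moreover have "\<forall>y\<in>UNIV. 0 \<le> \<gamma> (x, y)" using assms by (auto simp: couplings_def)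
  ultimately show ?thesis by (simp add: sum_nonneg_eq_0_iff)
qed

definition gl :: "('x::finite \<Rightarrow> real) \<Rightarrow> ('x \<times> 'x \<Rightarrow> real) \<Rightarrow> ('x \<times> 'x \<Rightarrow> real) \<Rightarrow> 'x \<Rightarrow> 'x \<Rightarrow> 'x \<Rightarrow> real" where
  "gl Q g1 g2 x y z = (if Q y = 0 then 0 else g1 (x,y) * g2 (y,z) / Q y)"

lemma gl_nonneg:
  assumes "g1 \<in> couplings P Q" "g2 \<in> couplings Q R"
  shows "0 \<le> gl Q g1 g2 x y z"
proof -
  have "0 \<le> Q y" using assms(1) unfolding couplings_def
    by (metis (mono_tags, lifting) mem_Collect_eq sum_nonneg)
  thus ?thesis using assms unfolding gl_def couplings_def by auto
qed

lemma gl_sum_z: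
  assumes "g1 \<in> couplings P Q" "g2 \<in> couplings Q R"
  shows "(\<Sum>z\<in>UNIV. gl Q g1 g2 x y z) = g1 (x,y)"
proof (cases "Q y = 0")
  case True thus ?thesis using zero_col[OF assms(1)] by (simp add: gl_def)
next
  case False
  have "(\<Sum>z\<in>UNIV. gl Q g1 g2 x y z) = g1 (x,y) * (\<Sum>z\<in>UNIV. g2 (y,z)) / Q y"
    using False by (simp add: gl_def sum_distrib_left sum_divide_distrib)
  also have "\<dots> = g1 (x,y)" using assms(2) False by (simp add: couplings_def)
  finally show ?thesis .
qed

lemma gl_sum_x:
  assumes "g1 \<in> couplings P Q" "g2 \<in> couplings Q R"
  shows "(\<Sum>x\<in>UNIV. gl Q g1 g2 x y z) = g2 (y,z)"
proof (cases "Q y = 0")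
  case True thus ?thesis using zero_row[OF assms(2)] by (simp add: gl_def)
next
  case False
  have "(\<Sum>x\<in>UNIV. gl Q g1 g2 x y z) = (\<Sum>x\<in>UNIV. g1 (x,y)) * g2 (y,z) / Q y"
    using False by (simp add: gl_def sum_distrib_right sum_divide_distrib)
  also have "\<dots> = g2 (y,z)" using assms(1) False by (simp add: couplings_def)
  finally show ?thesis .
qed

lemma glue_coupling:
  assumes "g1 \<in> couplings P Q" "g2 \<in> couplings Q R"
  shows "(\<lambda>(x,z). \<Sum>y\<in>UNIV. gl Q g1 g2 x y z) \<in> couplings P R"
proof -
  have "0 \<le> (\<Sum>y\<in>UNIV. gl Q g1 g2 x y z)" for x z
    by (intro sum_nonneg) (use gl_nonneg[OF assms] in auto)
  moreover have "(\<Sum>z\<in>UNIV. \<Sum>y\<in>UNIV. gl Q g1 g2 x y z) = P x" for x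
    using gl_sum_z[OF assms] assms(1) by (subst sum.swap) (simp add: couplings_def)
  moreover have "(\<Sum>x\<in>UNIV. \<Sum>y\<in>UNIV. gl Q g1 g2 x y z) = R z" for z
    using gl_sum_x[OF assms] assms(2) by (subst sum.swap) (simp add: couplings_def)
  ultimately show ?thesis by (auto simp: couplings_def)
qed

lemma glue_cost:
  assumes "g1 \<in> couplings P Q" "g2 \<in> couplings Q R"
    and tri: "\<And>x y z. d x z \<le> d x y + d y z"
  shows "cost d (\<lambda>(x,z). \<Sum>y\<in>UNIV. gl Q g1 g2 x y z) \<le> cost d g1 + cost d g2"
proof -
  let ?g = "gl Q g1 g2"
  have "cost d (\<lambda>(x,z). \<Sum>y\<in>UNIV. ?g x y z) = (\<Sum>x\<in>UNIV. \<Sum>z\<in>UNIV. \<Sum>y\<in>UNIV. ?g x y z * d x z)"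
    by (simp add: cost_def sum_pair sum_distrib_right)
  also have "\<dots> \<le> (\<Sum>x\<in>UNIV. \<Sum>z\<in>UNIV. \<Sum>y\<in>UNIV. ?g x y z * d x y + ?g x y z * d y z)"
    by (intro sum_mono) (metis distrib_left gl_nonneg[OF assms(1,2)] mult_left_mono tri)
  also have "\<dots> = (\<Sum>x\<in>UNIV. \<Sum>y\<in>UNIV. (\<Sum>z\<in>UNIV. ?g x y z) * d x y)
                 + (\<Sum>y\<in>UNIV. \<Sum>z\<in>UNIV. (\<Sum>x\<in>UNIV. ?g x y z) * d y z)"
  proof -
    have e1: "(\<Sum>x\<in>UNIV. \<Sum>z\<in>UNIV. \<Sum>y\<in>UNIV. ?g x y z * d x y) = (\<Sum>x\<in>UNIV. \<Sum>y\<in>UNIV. (\<Sum>z\<in>UNIV. ?g x y z) * d x y)"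
    proof (rule sum.cong[OF refl])
      fix x show "(\<Sum>z\<in>UNIV. \<Sum>y\<in>UNIV. ?g x y z * d x y) = (\<Sum>y\<in>UNIV. (\<Sum>z\<in>UNIV. ?g x y z) * d x y)"
        by (subst sum.swap) (simp add: sum_distrib_right)
    qed
    have "(\<Sum>x\<in>UNIV. \<Sum>z\<in>UNIV. \<Sum>y\<in>UNIV. ?g x y z * d y z) = (\<Sum>z\<in>UNIV. \<Sum>x\<in>UNIV. \<Sum>y\<in>UNIV. ?g x y z * d y z)"
      by (rule sum.swap)
    also have "\<dots> = (\<Sum>z\<in>UNIV. \<Sum>y\<in>UNIV. \<Sum>x\<in>UNIV. ?g x y z * d y z)"
      by (rule sum.cong[OF refl], rule sum.swap)
    also have "\<dots> = (\<Sum>y\<in>UNIV. \<Sum>z\<in>UNIV. \<Sum>x\<in>UNIV. ?g x y z * d y z)"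
      by (rule sum.swap)
    finally have e2: "(\<Sum>x\<in>UNIV. \<Sum>z\<in>UNIV. \<Sum>y\<in>UNIV. ?g x y z * d y z) = (\<Sum>y\<in>UNIV. \<Sum>z\<in>UNIV. (\<Sum>x\<in>UNIV. ?g x y z) * d y z)"
      by (simp add: sum_distrib_right)
    show ?thesis by (simp only: sum.distrib e1 e2)
  qed
  also have "\<dots> = cost d g1 + cost d g2"
    by (simp add: gl_sum_z[OF assms(1,2)] gl_sum_x[OF assms(1,2)] cost_def sum_pair)
  finally show ?thesis .
qed

lemma W1_tri:
  assumes "couplings P Q \<noteq> {}" "couplings Q R \<noteq> {}"
    and nn: "\<And>x y. 0 \<le> d x y" and tri: "\<And>x y z. d x z \<le> d x y + d y z"
  shows "W1 d P R \<le> W1 d P Q + W1 d Q R"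
proof -
  have key: "W1 d P R \<le> cost d g1 + cost d g2" if "g1 \<in> couplings P Q" "g2 \<in> couplings Q R" for g1 g2
    using W1_le[where d=d, OF glue_coupling[OF that] nn] glue_cost[where d=d, OF that tri] by linarith
  have "W1 d P R - cost d g2 \<le> W1 d P Q" if "g2 \<in> couplings Q R" for g2
    using key[OF _ that] by (intro W1_ge[OF assms(1)]) (auto simp: algebra_simps)
  hence "W1 d P R - W1 d P Q \<le> W1 d Q R"
    by (intro W1_ge[OF assms(2)]) (auto simp: algebra_simps)
  thus ?thesis by simp
qed


lemma oh_sum:
  assumes "0 < p"
  shows "(\<Sum>k\<in>(UNIV::'x::finite set). \<bar>onehot y k - onehot y' k\<bar> powr p) = (if y = y' then 0 else 2)"
proof -
  have "\<bar>onehot y k - onehot y' k\<bar> powr p = of_bool (k = y \<and> y \<noteq> y') + of_bool (k = y' \<and> y \<noteq> y')" for k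
    using assms by (auto simp: onehot_def)
  hence "(\<Sum>k\<in>(UNIV::'x set). \<bar>onehot y k - onehot y' k\<bar> powr p)
     = (\<Sum>k\<in>(UNIV::'x set). of_bool (k = y \<and> y \<noteq> y')) + (\<Sum>k\<in>(UNIV::'x set). of_bool (k = y' \<and> y \<noteq> y'))"
    by (simp add: sum.distrib)
  also have "\<dots> = (if y = y' then 0 else 2)" by auto
  finally show ?thesis .
qed

lemma pd_eq:
  assumes "1 \<le> p"
  shows "pair_dist p z z' = (if fst z \<noteq> fst z' \<and> snd z \<noteq> snd z' then 2 powr (1/p) * 2 powr (1/p)
            else if fst z \<noteq> fst z' \<or> snd z \<noteq> snd z' then 2 powr (1/p) else 0)"
proof -
  have p0: "0 < p" using assms by simp
  have "pair_dist p z z' = ((\<Sum>k\<in>UNIV. \<bar>onehot (fst z) k - onehot (fst z') k\<bar> powr p)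
      + (\<Sum>k\<in>UNIV. \<bar>onehot (snd z) k - onehot (snd z') k\<bar> powr p)) powr (1/p)"
    unfolding pair_dist_def lp_dist_def lp_norm_def concat_vec_def
    by (simp add: sum.Plus[of UNIV UNIV, simplified] o_def)
  also have "\<dots> = (if fst z \<noteq> fst z' \<and> snd z \<noteq> snd z' then 2 powr (1/p) * 2 powr (1/p)
            else if fst z \<noteq> fst z' \<or> snd z \<noteq> snd z' then 2 powr (1/p) else 0)"
    using p0 by (simp add: oh_sum[OF p0] powr_mult[symmetric])
  finally show ?thesis .
qed

lemma c_bounds:
  assumes "1 \<le> p"
  shows "1 \<le> 2 powr (1/p)" "2 powr (1/p) \<le> (2::real)"
proof -
  show "1 \<le> 2 powr (1/p)" using assms by (intro ge_one_powr_ge_zero) auto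
  have "2 powr (1/p) \<le> (2::real) powr 1" using assms by (intro powr_mono) auto
  thus "2 powr (1/p) \<le> (2::real)" by simp
qed

lemma pd_nonneg: "1 \<le> p \<Longrightarrow> 0 \<le> pair_dist p z z'"
  using c_bounds[of p] by (simp add: pd_eq)

lemma pd_tri:
  assumes "1 \<le> p"
  shows "pair_dist p x z \<le> pair_dist p x y + pair_dist p y z"
proof -
  define c :: real where "c = 2 powr (1/p)"
  have c1: "1 \<le> c" and c2: "c \<le> 2" using c_bounds[OF assms] by (auto simp: c_def)
  have "c * c \<le> 2 * c" using c2 c1 by (intro mult_right_mono) auto
  moreover have "c * 1 \<le> c * c" using c1 by (intro mult_left_mono) auto
  ultimately show ?thesis using c1 unfolding pd_eq[OF assms] c_def[symmetric]
    by (cases x; cases y; cases z) auto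
qed

lemma pd_same: "1 \<le> p \<Longrightarrow> pair_dist p (y, a) (y, b) = (if a = b then 0 else 2 powr (1/p))"
  by (simp add: pd_eq)


lemma meas_eq:
  assumes "f \<in> M \<rightarrow>\<^sub>M count_space UNIV"
  shows "{w\<in>space M. f w = b} \<in> sets M"
proof -
  have "f -` {b} \<inter> space M \<in> sets M" using measurable_sets[OF assms] by simp
  moreover have "f -` {b} \<inter> space M = {w\<in>space M. f w = b}" by auto
  ultimately show ?thesis by simp
qed

lemma meas_conj:
  assumes "f \<in> M \<rightarrow>\<^sub>M count_space UNIV" "{w\<in>space M. P w} \<in> sets M"
  shows "{w\<in>space M. P w \<and> f w = b} \<in> sets M"
proof -
  have "{w\<in>space M. P w \<and> f w = b} = {w\<in>space M. P w} \<inter> {w\<in>space M. f w = b}" by auto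
  thus ?thesis using meas_eq[OF assms(1)] assms(2) by auto
qed

lemma (in prob_space) H:
  fixes f :: "'a \<Rightarrow> 'b::finite"
  assumes "f \<in> M \<rightarrow>\<^sub>M count_space UNIV" "{w\<in>space M. P w} \<in> sets M"
  shows "(\<Sum>b\<in>UNIV. measure M {w\<in>space M. P w \<and> f w = b}) = measure M {w\<in>space M. P w}"
proof -
  have "{w\<in>space M. P w} = (\<Union>b\<in>UNIV. {w\<in>space M. P w \<and> f w = b})" by auto
  moreover have "measure M (\<Union>b\<in>UNIV. {w\<in>space M. P w \<and> f w = b}) = (\<Sum>b\<in>UNIV. measure M {w\<in>space M. P w \<and> f w = b})"
    using meas_conj[OF assms]
    by (intro finite_measure_finite_Union) (auto simp: disjoint_family_on_def)
  ultimately show ?thesis by simp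
qed

lemma (in prob_space) H1:
  fixes f :: "'a \<Rightarrow> 'b::finite"
  assumes "f \<in> M \<rightarrow>\<^sub>M count_space UNIV"
  shows "(\<Sum>b\<in>UNIV. measure M {w\<in>space M. f w = b}) = 1"
  using H[OF assms, of "\<lambda>_. True"] by (simp add: prob_space)

lemma prod_coupling:
  assumes "\<And>x. 0 \<le> P x" "\<And>x. 0 \<le> Q x" "sum P UNIV = 1" "sum Q UNIV = 1"
  shows "(\<lambda>(x,x'). P x * Q x') \<in> couplings P Q"
  using assms by (auto simp: couplings_def sum_distrib_left[symmetric] sum_distrib_right[symmetric])

lemma delta2:
  "(\<Sum>y'\<in>(UNIV::'y::finite set). \<Sum>b\<in>(UNIV::'b::finite set). if y = y' then h y' b else 0) = (\<Sum>b\<in>UNIV. h y b)"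
proof -
  have "(\<Sum>y'\<in>(UNIV::'y set). \<Sum>b\<in>(UNIV::'b set). if y = y' then h y' b else 0)
      = (\<Sum>y'\<in>(UNIV::'y set). if y = y' then (\<Sum>b\<in>UNIV. h y' b) else 0)"
    by (rule sum.cong) auto
  also have "\<dots> = (\<Sum>b\<in>UNIV. h y b)" by simp
  finally show ?thesis .
qed

lemma delta2':
  "(\<Sum>y\<in>(UNIV::'y::finite set). \<Sum>b\<in>(UNIV::'b::finite set). if y = y' then h y b else 0) = (\<Sum>b\<in>UNIV. h y' b)"
proof -
  have "(\<Sum>y\<in>(UNIV::'y set). \<Sum>b\<in>(UNIV::'b set). if y = y' then h y b else 0)
      = (\<Sum>y\<in>(UNIV::'y set). if y = y' then (\<Sum>b\<in>UNIV. h y b) else 0)"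
    by (rule sum.cong) auto
  also have "\<dots> = (\<Sum>b\<in>UNIV. h y' b)" by simp
  finally show ?thesis .
qed


theorem lemma2:
  fixes M :: "'w measure" and Yh :: "'w \<Rightarrow> 'y::finite"
    and A Ah :: "'w \<Rightarrow> 'a::finite" and p :: real
  assumes "prob_space M"
    and "Yh \<in> M \<rightarrow>\<^sub>M count_space UNIV"
    and "A \<in> M \<rightarrow>\<^sub>M count_space UNIV"
    and "Ah \<in> M \<rightarrow>\<^sub>M count_space UNIV"
    and "1 \<le> p"
  shows "IW p M Yh A \<le> IW p M Yh Ah
           + 2 * 2 powr (1 / p) * measure M {w \<in> space M. A w \<noteq> Ah w}"
proof -
  interpret prob_space M by fact
  note mY = assms(2) and mA = assms(3) and mAh = assms(4) and p1 = assms(5)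
  define c where "c = 2 powr (1/p)"
  define eps where "eps = measure M {w \<in> space M. A w \<noteq> Ah w}"
  define d :: "('y \<times> 'a) \<Rightarrow> ('y \<times> 'a) \<Rightarrow> real" where "d = pair_dist p"
  define S where "S y a b = measure M {w\<in>space M. (Yh w = y \<and> A w = a) \<and> Ah w = b}" for y a b
  define R where "R a b = measure M {w\<in>space M. A w = a \<and> Ah w = b}" for a b
  define PY where "PY y = measure M {w\<in>space M. Yh w = y}" for y
  define JA where "JA = joint_law M Yh A"
  define JAh where "JAh = joint_law M Yh Ah"
  define QA where "QA = prod_marginals M Yh A"
  define QAh where "QAh = prod_marginals M Yh Ah"
  have ifm: "\<And>P (a::real) b. (if P then a else 0) * b = (if P then a*b else 0)" by simp
  have dnn: "\<And>x y. 0 \<le> d x y" unfolding d_def using pd_nonneg[OF p1] by blast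
  have dtri: "\<And>x y z. d x z \<le> d x y + d y z" unfolding d_def using pd_tri[OF p1] by blast
  have dsame: "\<And>y a b. d (y,a) (y,b) = (if a = b then 0 else c)" unfolding d_def c_def using pd_same[OF p1] by blast
  have mE: "{w \<in> space M. A w \<noteq> Ah w} \<in> sets M"
  proof -
    have "{w \<in> space M. A w \<noteq> Ah w} = (\<Union>a\<in>UNIV. {w\<in>space M. A w = a} \<inter> (space M - {w\<in>space M. Ah w = a}))"
      by auto
    thus ?thesis using meas_eq[OF mA] meas_eq[OF mAh] by auto
  qed
  have mT: "{w \<in> space M. True} \<in> sets M" by simp
  have eps3: "(\<Sum>y\<in>UNIV. \<Sum>a\<in>UNIV. \<Sum>b\<in>UNIV. measure M {w\<in>space M. ((A w \<noteq> Ah w \<and> Yh w = y) \<and> A w = a) \<and> Ah w = b}) = eps"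
  proof -
    have "(\<Sum>y\<in>UNIV. \<Sum>a\<in>UNIV. \<Sum>b\<in>UNIV. measure M {w\<in>space M. ((A w \<noteq> Ah w \<and> Yh w = y) \<and> A w = a) \<and> Ah w = b})
       = (\<Sum>y\<in>UNIV. \<Sum>a\<in>UNIV. measure M {w\<in>space M. (A w \<noteq> Ah w \<and> Yh w = y) \<and> A w = a})"
      using H[OF mAh meas_conj[OF mA meas_conj[OF mY mE]]] by simp
    also have "\<dots> = (\<Sum>y\<in>UNIV. measure M {w\<in>space M. A w \<noteq> Ah w \<and> Yh w = y})"
      using H[OF mA meas_conj[OF mY mE]] by simp
    also have "\<dots> = eps" unfolding eps_def using H[OF mY mE] by simp
    finally show ?thesis .
  qed
  have eps2: "(\<Sum>a\<in>UNIV. \<Sum>b\<in>UNIV. measure M {w\<in>space M. (A w \<noteq> Ah w \<and> A w = a) \<and> Ah w = b}) = eps"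
  proof -
    have "(\<Sum>a\<in>UNIV. \<Sum>b\<in>UNIV. measure M {w\<in>space M. (A w \<noteq> Ah w \<and> A w = a) \<and> Ah w = b})
       = (\<Sum>a\<in>UNIV. measure M {w\<in>space M. A w \<noteq> Ah w \<and> A w = a})"
      using H[OF mAh meas_conj[OF mA mE]] by simp
    also have "\<dots> = eps" unfolding eps_def using H[OF mA mE] by simp
    finally show ?thesis .
  qed
  have JA_S: "JA (y,a) = (\<Sum>b\<in>UNIV. S y a b)" for y a
    unfolding JA_def joint_law_def S_def using H[OF mAh meas_conj[OF mA meas_eq[OF mY]]] by simp
  have JAh_S: "JAh (y,b) = (\<Sum>a\<in>UNIV. S y a b)" for y b
  proof -
    have "JAh (y,b) = (\<Sum>a\<in>UNIV. measure M {w\<in>space M. (Yh w = y \<and> Ah w = b) \<and> A w = a})"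
      unfolding JAh_def joint_law_def using H[OF mA meas_conj[OF mAh meas_eq[OF mY]]] by simp
    also have "\<dots> = (\<Sum>a\<in>UNIV. S y a b)" unfolding S_def
      by (intro sum.cong refl arg_cong[where f="measure M"]) auto
    finally show ?thesis .
  qed
  have RA: "(\<Sum>b\<in>UNIV. R a b) = measure M {w\<in>space M. A w = a}" for a
    unfolding R_def using H[OF mAh meas_eq[OF mA]] by simp
  have RAh: "(\<Sum>a\<in>UNIV. R a b) = measure M {w\<in>space M. Ah w = b}" for b
  proof -
    have "(\<Sum>a\<in>UNIV. R a b) = (\<Sum>a\<in>UNIV. measure M {w\<in>space M. Ah w = b \<and> A w = a})"
      unfolding R_def by (intro sum.cong refl arg_cong[where f="measure M"]) auto
    also have "\<dots> = measure M {w\<in>space M. Ah w = b}" using H[OF mA meas_eq[OF mAh]] by simp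
    finally show ?thesis .
  qed
  have PY1: "(\<Sum>y\<in>UNIV. PY y) = 1" unfolding PY_def using H1[OF mY] .
  have sJAh: "sum JAh UNIV = 1"
  proof -
    have "sum JAh UNIV = (\<Sum>y\<in>UNIV. \<Sum>b\<in>UNIV. measure M {w\<in>space M. Yh w = y \<and> Ah w = b})"
      by (simp add: sum_pair JAh_def joint_law_def)
    also have "\<dots> = (\<Sum>y\<in>UNIV. PY y)" unfolding PY_def using H[OF mAh meas_eq[OF mY]] by simp
    finally show ?thesis using PY1 by simp
  qed
  have sQ: "sum (prod_marginals M Yh B) UNIV = 1" if mB: "B \<in> M \<rightarrow>\<^sub>M count_space UNIV" for B :: "'w \<Rightarrow> 'a"
    by (simp add: sum_pair prod_marginals_def sum_distrib_left[symmetric] sum_distrib_right[symmetric] H1[OF mY] H1[OF mB])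
  have nn: "0 \<le> joint_law M Yh B x" "0 \<le> prod_marginals M Yh B x" for B :: "'w \<Rightarrow> 'a" and x
    by (auto simp: joint_law_def prod_marginals_def split: prod.splits)
  have ne1: "couplings JAh QA \<noteq> {}"
    using prod_coupling[of JAh QA] sJAh sQ[OF mA] nn unfolding JAh_def QA_def by blast
  have ne2: "couplings JAh QAh \<noteq> {}"
    using prod_coupling[of JAh QAh] sJAh sQ[OF mAh] nn unfolding JAh_def QAh_def by blast
  define g1 where "g1 = (\<lambda>(x::'y\<times>'a, x'::'y\<times>'a). if fst x = fst x' then S (fst x) (snd x) (snd x') else 0)"
  have g1c: "g1 \<in> couplings JA JAh"
    unfolding couplings_def
  proof (intro CollectI conjI allI)
    fix z show "0 \<le> g1 z" by (auto simp: g1_def S_def split: prod.splits)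
  next
    fix x :: "'y \<times> 'a" obtain y a where x: "x = (y,a)" by fastforce
    have "(\<Sum>x'\<in>UNIV. g1 (x, x')) = (\<Sum>y'\<in>UNIV. \<Sum>b\<in>UNIV. if y = y' then S y a b else 0)"
      by (simp add: sum_pair g1_def x cong: if_cong)
    also have "\<dots> = JA x" unfolding x JA_S by (rule delta2)
    finally show "(\<Sum>x'\<in>UNIV. g1 (x, x')) = JA x" .
  next
    fix x' :: "'y \<times> 'a" obtain y' b where x': "x' = (y',b)" by fastforce
    have "(\<Sum>x\<in>UNIV. g1 (x, x')) = (\<Sum>y\<in>UNIV. \<Sum>a\<in>UNIV. if y = y' then S y a b else 0)"
      by (simp add: sum_pair g1_def x' cong: if_cong)
    also have "\<dots> = JAh x'" unfolding x' JAh_S by (rule delta2')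
    finally show "(\<Sum>x\<in>UNIV. g1 (x, x')) = JAh x'" .
  qed
  have g1cost: "cost d g1 = c * eps"
  proof -
    have "cost d g1 = (\<Sum>y\<in>UNIV. \<Sum>a\<in>UNIV. \<Sum>y'\<in>UNIV. \<Sum>b\<in>UNIV. if y = y' then S y a b * d (y,a) (y,b) else 0)"
      by (simp add: cost_def sum_pair g1_def ifm cong: if_cong)
    also have "\<dots> = (\<Sum>y\<in>UNIV. \<Sum>a\<in>UNIV. \<Sum>b\<in>UNIV. S y a b * d (y,a) (y,b))"
      by (simp only: delta2)
    also have "\<dots> = (\<Sum>y\<in>UNIV. \<Sum>a\<in>UNIV. \<Sum>b\<in>UNIV. c * measure M {w\<in>space M. ((A w \<noteq> Ah w \<and> Yh w = y) \<and> A w = a) \<and> Ah w = b})"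
    proof (intro sum.cong refl)
      fix y a b
      show "S y a b * d (y,a) (y,b) = c * measure M {w\<in>space M. ((A w \<noteq> Ah w \<and> Yh w = y) \<and> A w = a) \<and> Ah w = b}"
      proof (cases "a = b")
        case True
        hence e: "{w\<in>space M. ((A w \<noteq> Ah w \<and> Yh w = y) \<and> A w = a) \<and> Ah w = b} = {}" by auto
        show ?thesis unfolding e using True by (simp add: dsame)
      next
        case False
        hence "{w\<in>space M. ((A w \<noteq> Ah w \<and> Yh w = y) \<and> A w = a) \<and> Ah w = b} = {w\<in>space M. (Yh w = y \<and> A w = a) \<and> Ah w = b}"
          by auto
        thus ?thesis using False by (simp add: dsame S_def)
      qed
    qed
    also have "\<dots> = c * eps" using eps3 by (simp add: sum_distrib_left[symmetric])
    finally show ?thesis .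
  qed
  define g2 where "g2 = (\<lambda>(x::'y\<times>'a, x'::'y\<times>'a). if fst x = fst x' then PY (fst x) * R (snd x') (snd x) else 0)"
  have g2c: "g2 \<in> couplings QAh QA"
    unfolding couplings_def
  proof (intro CollectI conjI allI)
    fix z show "0 \<le> g2 z" by (auto simp: g2_def R_def PY_def split: prod.splits)
  next
    fix x :: "'y \<times> 'a" obtain y b where x: "x = (y,b)" by fastforce
    have "(\<Sum>x'\<in>UNIV. g2 (x, x')) = (\<Sum>y'\<in>UNIV. \<Sum>a\<in>UNIV. if y = y' then PY y * R a b else 0)"
      by (simp add: sum_pair g2_def x cong: if_cong)
    also have "\<dots> = (\<Sum>a\<in>UNIV. PY y * R a b)" by (rule delta2)
    also have "\<dots> = QAh x" unfolding x QAh_def prod_marginals_def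
      by (simp add: sum_distrib_left[symmetric] RAh PY_def)
    finally show "(\<Sum>x'\<in>UNIV. g2 (x, x')) = QAh x" .
  next
    fix x' :: "'y \<times> 'a" obtain y' a where x': "x' = (y',a)" by fastforce
    have "(\<Sum>x\<in>UNIV. g2 (x, x')) = (\<Sum>y\<in>UNIV. \<Sum>b\<in>UNIV. if y = y' then PY y * R a b else 0)"
      by (simp add: sum_pair g2_def x' cong: if_cong)
    also have "\<dots> = (\<Sum>b\<in>UNIV. PY y' * R a b)" by (rule delta2')
    also have "\<dots> = QA x'" unfolding x' QA_def prod_marginals_def
      by (simp add: sum_distrib_left[symmetric] RA PY_def)
    finally show "(\<Sum>x\<in>UNIV. g2 (x, x')) = QA x'" .
  qed
  have g2cost: "cost d g2 = c * eps"
  proof -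
    have "cost d g2 = (\<Sum>y\<in>UNIV. \<Sum>b\<in>UNIV. \<Sum>y'\<in>UNIV. \<Sum>a\<in>UNIV. if y = y' then PY y * R a b * d (y,b) (y,a) else 0)"
      by (simp add: cost_def sum_pair g2_def ifm cong: if_cong)
    also have "\<dots> = (\<Sum>y\<in>UNIV. \<Sum>b\<in>UNIV. \<Sum>a\<in>UNIV. PY y * R a b * d (y,b) (y,a))"
      by (simp only: delta2)
    also have "\<dots> = (\<Sum>y\<in>UNIV. PY y * (\<Sum>b\<in>UNIV. \<Sum>a\<in>UNIV. R a b * (if b = a then 0 else c)))"
      by (simp add: dsame sum_distrib_left mult.assoc)
    also have "(\<Sum>b\<in>UNIV. \<Sum>a\<in>UNIV. R a b * (if b = a then 0 else c))
       = (\<Sum>a\<in>UNIV. \<Sum>b\<in>UNIV. c * measure M {w\<in>space M. (A w \<noteq> Ah w \<and> A w = a) \<and> Ah w = b})"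
    proof -
      have "(\<Sum>b\<in>UNIV. \<Sum>a\<in>UNIV. R a b * (if b = a then 0 else c)) = (\<Sum>a\<in>UNIV. \<Sum>b\<in>UNIV. R a b * (if b = a then 0 else c))"
        by (rule sum.swap)
      also have "\<dots> = (\<Sum>a\<in>UNIV. \<Sum>b\<in>UNIV. c * measure M {w\<in>space M. (A w \<noteq> Ah w \<and> A w = a) \<and> Ah w = b})"
      proof (intro sum.cong refl)
        fix a b
        show "R a b * (if b = a then 0 else c) = c * measure M {w\<in>space M. (A w \<noteq> Ah w \<and> A w = a) \<and> Ah w = b}"
        proof (cases "a = b")
          case True
          hence e: "{w\<in>space M. (A w \<noteq> Ah w \<and> A w = a) \<and> Ah w = b} = {}" by auto
          show ?thesis unfolding e using True by simp
        next
          case False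
          hence "{w\<in>space M. (A w \<noteq> Ah w \<and> A w = a) \<and> Ah w = b} = {w\<in>space M. A w = a \<and> Ah w = b}"
            by auto
          thus ?thesis using False by (auto simp: R_def)
        qed
      qed
      finally show ?thesis .
    qed
    also have "\<dots> = c * eps" using eps2 by (simp add: sum_distrib_left[symmetric])
    finally show ?thesis using PY1 by (simp add: sum_distrib_right[symmetric])
  qed
  have "W1 d JA QA \<le> W1 d JA JAh + W1 d JAh QA"
    using W1_tri[where d=d, OF _ ne1 dnn dtri] g1c by blast
  also have "W1 d JAh QA \<le> W1 d JAh QAh + W1 d QAh QA"
    using W1_tri[where d=d, OF ne2 _ dnn dtri] g2c by blast
  also have "W1 d JA JAh \<le> c * eps" using W1_le[where d=d, OF g1c dnn] g1cost by simp
  also have "W1 d QAh QA \<le> c * eps" using W1_le[where d=d, OF g2c dnn] g2cost by simp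
  finally have "W1 d JA QA \<le> W1 d JAh QAh + 2 * c * eps" by simp
  thus ?thesis unfolding IW_def d_def JA_def QA_def JAh_def QAh_def c_def eps_def .
qed

end
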